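(* Let $n\ge 1$, let $a(x),b(x)\in R_n=\mathbb{F}_2[x]/\langle x^n-1\rangle$, and let $C=\langle a(x)+\omega b(x)\rangle\subseteq\mathbb{F}_4^n$ be the one-generator additive cyclic code they define, with $\dim_{\mathbb{F}_2}(C)=k$. Then there exists a binary quantum stabilizer code, which is a generalized bicycle code, with parameters $[[2n,\,2(n-k),\,d]]$, where $$d\ \ge\ d\big((C^R)^{\perp_s}\setminus C\big)\ \ge\ d\big((C^R)^{\perp_s}\big).$$ In particular, if $C$ is palindromic, i.e. $C=C^R$, then $d\ge d(C^{\perp_s}\setminus C)\ge d(C^{\perp_s})$.
   Context: $\mathbb{F}_4=\{0,1,\omega,\omega^2\}$ with $\omega^2=\omega+1$. Vectors of $\mathbb{F}_4^n$ are written as polynomials $\sum_{i=0}^{n-1}v_ix^i$ with $v_i\in\mathbb{F}_4$, indices modulo $n$; every such vector is uniquely $m(x)+\omega n(x)$ with $m,n\in R_n$ (binary polynomials). An additive code is an $\mathbb{F}_2$-subspace of $\mathbb{F}_4^n$; $\langle a(x)+\omega b(x)\rangle$ denotes the $\mathbb{F}_2$-span of $\{x^i(a(x)+\omega b(x)):0\le i\le n-1\}$ (products computed modulo $x^n-1$). The reciprocal code is $C^R=\langle a(x^{-1})+\omega b(x^{-1})\rangle$, where $x^{-1}=x^{n-1}$ in $R_n$. The symplectic inner product of $(a_i+\omega b_i)_i$ and $(c_i+\omega d_i)_i$ (with $a_i,b_i,c_i,d_i\in\mathbb{F}_2$) is $\sum_i (a_id_i+b_ic_i)\in\mathbb{F}_2$,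 and $D^{\perp_s}$ denotes the set of vectors symplectically orthogonal to all of an additive code $D$. For a set $S$ of vectors, $d(S)$ is the minimum Hamming weight (number of nonzero coordinates) of a nonzero element of $S$. A generalized bicycle (GB) code defined by $a(x),b(x)\in R_n$ is the CSS code on $2n$ qubits whose X-stabilizer group corresponds to $\{(c(x)a(x),c(x)b(x)):c\in R_n\}\subseteq\mathbb{F}_2^{2n}$ and Z-stabilizer group to $\{(c(x)b(x^{-1}),c(x)a(x^{-1})):c\in R_n\}$; an $[[N,K,D]]$ code has $N$ physical qubits, $K$ logical qubits and minimum distance $D$. *)

theory Defs
  imports Main "HOL-Library.Z2" "HOL-Library.Function_Algebras" "HOL-Library.Product_Plus"
    "HOL-Library.Extended_Nat"
begin

text \<open>Binary polynomials in R_n = F_2[x]/(x^n-1) are represented as coefficient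
functions nat => bit that vanish from index n on. A vector m(x) + omega n(x) of F_4^n
is represented by the pair (m, n). A binary vector of F_2^(2n) (2n qubits, as in the
GB code definition) is likewise a pair (u, v) of length-n binary vectors.\<close>

type_synonym bpoly = "nat \<Rightarrow> bit"
type_synonym qvec = "bpoly \<times> bpoly"

definition Rn :: "nat \<Rightarrow> bpoly set" where
  "Rn n = {f. \<forall>i\<ge>n. f i = 0}"

definition cmul :: "nat \<Rightarrow> bpoly \<Rightarrow> bpoly \<Rightarrow> bpoly" where
  "cmul n f g = (\<lambda>i. if i < n then (\<Sum>j<n. f j * g ((i + n - j) mod n)) else 0)"

definition xmono :: "nat \<Rightarrow> nat \<Rightarrow> bpoly" where
  "xmono n i = (\<lambda>j. if j < n \<and> j = i mod n then 1 else 0)"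

text \<open>f(x^{-1}) in R_n, with x^{-1} = x^{n-1}.\<close>
definition recip :: "nat \<Rightarrow> bpoly \<Rightarrow> bpoly" where
  "recip n f = (\<lambda>i. if i < n then f ((n - i) mod n) else 0)"

definition pscale :: "bit \<Rightarrow> qvec \<Rightarrow> qvec" where
  "pscale c p = ((\<lambda>i. c * fst p i), (\<lambda>i. c * snd p i))"

abbreviation span2 :: "qvec set \<Rightarrow> qvec set" where
  "span2 \<equiv> module.span pscale"

abbreviation dim2 :: "qvec set \<Rightarrow> nat" where
  "dim2 \<equiv> vector_space.dim pscale"

definition addcyc :: "nat \<Rightarrow> bpoly \<Rightarrow> bpoly \<Rightarrow> qvec set" where
  "addcyc n a b = span2 {(cmul n (xmono n i) a, cmul n (xmono n i) b) | i. i < n}"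

definition addcyc_recip :: "nat \<Rightarrow> bpoly \<Rightarrow> bpoly \<Rightarrow> qvec set" where
  "addcyc_recip n a b = addcyc n (recip n a) (recip n b)"

definition sympl :: "nat \<Rightarrow> qvec \<Rightarrow> qvec \<Rightarrow> bit" where
  "sympl n p q = (\<Sum>i<n. fst p i * snd q i + snd p i * fst q i)"

definition F4vecs :: "nat \<Rightarrow> qvec set" where
  "F4vecs n = Rn n \<times> Rn n"

definition perp_s :: "nat \<Rightarrow> qvec set \<Rightarrow> qvec set" where
  "perp_s n D = {v \<in> F4vecs n. \<forall>w\<in>D. sympl n v w = 0}"

definition wt4 :: "nat \<Rightarrow> qvec \<Rightarrow> nat" where
  "wt4 n p = card {i. i < n \<and> (fst p i \<noteq> 0 \<or> snd p i \<noteq> 0)}"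

text \<open>Minimum F_4-weight of a nonzero element; Inf of the empty set is infinity.\<close>
definition mind4 :: "nat \<Rightarrow> qvec set \<Rightarrow> enat" where
  "mind4 n S = Inf ((\<lambda>p. enat (wt4 n p)) ` (S - {0}))"

definition bwt :: "nat \<Rightarrow> qvec \<Rightarrow> nat" where
  "bwt n p = card {i. i < n \<and> fst p i \<noteq> 0} + card {i. i < n \<and> snd p i \<noteq> 0}"

definition bdot :: "nat \<Rightarrow> qvec \<Rightarrow> qvec \<Rightarrow> bit" where
  "bdot n p q = (\<Sum>i<n. fst p i * fst q i + snd p i * snd q i)"

definition bdual :: "nat \<Rightarrow> qvec set \<Rightarrow> qvec set" where
  "bdual n S = {v \<in> Rn n \<times> Rn n. \<forall>w\<in>S. bdot n v w = 0}"

definition mind2 :: "nat \<Rightarrow> qvec set \<Rightarrow> enat" where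
  "mind2 n S = Inf ((\<lambda>p. enat (bwt n p)) ` (S - {0}))"

text \<open>The GB code defined by a, b: X- and Z-stabilizer groups (as binary vector spaces).\<close>
definition gbX :: "nat \<Rightarrow> bpoly \<Rightarrow> bpoly \<Rightarrow> qvec set" where
  "gbX n a b = {(cmul n c a, cmul n c b) | c. c \<in> Rn n}"

definition gbZ :: "nat \<Rightarrow> bpoly \<Rightarrow> bpoly \<Rightarrow> qvec set" where
  "gbZ n a b = {(cmul n c (recip n b), cmul n c (recip n a)) | c. c \<in> Rn n}"

text \<open>CSS code parameters on N = 2n qubits: K = N - rank H_X - rank H_Z and
  D = minimum weight of a nontrivial logical operator (X- or Z-type).\<close>
definition css_N :: "nat \<Rightarrow> nat" where
  "css_N n = 2 * n"

definition css_K :: "nat \<Rightarrow> qvec set \<Rightarrow> qvec set \<Rightarrow> nat" where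
  "css_K n SX SZ = css_N n - dim2 SX - dim2 SZ"

definition css_D :: "nat \<Rightarrow> qvec set \<Rightarrow> qvec set \<Rightarrow> enat" where
  "css_D n SX SZ = mind2 n ((bdual n SZ - SX) \<union> (bdual n SX - SZ))"

definition gb_N :: "nat \<Rightarrow> bpoly \<Rightarrow> bpoly \<Rightarrow> nat" where
  "gb_N n a b = css_N n"
definition gb_K :: "nat \<Rightarrow> bpoly \<Rightarrow> bpoly \<Rightarrow> nat" where
  "gb_K n a b = css_K n (gbX n a b) (gbZ n a b)"
definition gb_D :: "nat \<Rightarrow> bpoly \<Rightarrow> bpoly \<Rightarrow> enat" where
  "gb_D n a b = css_D n (gbX n a b) (gbZ n a b)"

end

theory Submission
  imports Defs
begin


lemma sum_fun_apply: "(\<Sum>k\<in>A. (f k :: 'a \<Rightarrow> 'b::comm_monoid_add)) x = (\<Sum>k\<in>A. f k x)"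
  by (induction A rule: infinite_finite_induct) auto

lemma modh: "0 < (n::nat) \<Longrightarrow> x < 2*n \<Longrightarrow> x mod n = (if x < n then x else x - n)"
  by (simp add: le_mod_geq)

lemma idx1: "i < (n::nat) \<Longrightarrow> j < n \<Longrightarrow>
  ((n - i) mod n + n - (n - j) mod n) mod n = (n - (i + n - j) mod n) mod n"
  apply (cases "i = 0"; cases "j = 0"; cases "i \<le> j")
  apply (auto simp: modh)
  done

lemma idx2: "i < (n::nat) \<Longrightarrow> (n - (n - i) mod n) mod n = i"
  by (cases "i = 0") (auto simp: modh)

lemma hbij: "bij_betw (\<lambda>i::nat. (n - i) mod n) {..<n} {..<n}"
proof (cases "n = 0")
  case True then show ?thesis by (simp add: bij_betw_def)
next
  case False
  show ?thesis
    apply (rule bij_betw_byWitness[where f' = "\<lambda>i. (n - i) mod n"])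
    using False idx2 by auto
qed

lemma cmul_Rn: "cmul n f g \<in> Rn n" by (simp add: cmul_def Rn_def)
lemma recip_Rn: "recip n f \<in> Rn n" by (simp add: recip_def Rn_def)

lemma recip_recip: "f \<in> Rn n \<Longrightarrow> recip n (recip n f) = f"
  apply (rule ext)
  apply (auto simp: recip_def Rn_def idx2)
  done

lemma sum_reidx: "(\<Sum>j<n. F ((n - j) mod n)) = (\<Sum>j<(n::nat). F j)"
  using sum.reindex_bij_betw[OF hbij[of n], of F] by simp

lemma recip_cmul: "0 < n \<Longrightarrow> recip n (cmul n f g) = cmul n (recip n f) (recip n g)"
proof (rule ext)
  fix i assume n: "0 < n"
  show "recip n (cmul n f g) i = cmul n (recip n f) (recip n g) i"
  proof (cases "i < n")
    case False then show ?thesis by (simp add: recip_def cmul_def)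
  next
    case True
    have "recip n (cmul n f g) i = (\<Sum>j<n. f j * g (((n - i) mod n + n - j) mod n))"
      using True n by (simp add: recip_def cmul_def)
    also have "\<dots> = (\<Sum>j<n. f ((n - j) mod n) * g (((n - i) mod n + n - (n - j) mod n) mod n))"
      by (rule sum_reidx[symmetric, where F = "\<lambda>j. f j * g (((n - i) mod n + n - j) mod n)"])
    also have "\<dots> = (\<Sum>j<n. f ((n - j) mod n) * g ((n - (i + n - j) mod n) mod n))"
      using True by (intro sum.cong refl) (simp add: idx1)
    also have "\<dots> = cmul n (recip n f) (recip n g) i"
      using True n by (simp add: recip_def cmul_def)
    finally show ?thesis .
  qed
qed

lemma sum_recip: "(\<Sum>i<n. recip n u i * recip n w i) = (\<Sum>i<n. u i * w i)"
  unfolding recip_def using sum_reidx[of "\<lambda>i. u i * w i" n] by simp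


lemma card_filter_sum: "card {i. i < (n::nat) \<and> Q i} = (\<Sum>i<n. if Q i then 1 else 0)"
proof -
  have "{i. i < n \<and> Q i} = {i\<in>{..<n}. Q i}" by auto
  then show ?thesis using sum.inter_filter[of "{..<n}" "\<lambda>_. 1::nat" Q] by simp
qed

lemma card_recip: "card {i. i < n \<and> P (recip n u i) (recip n w i)} = card {i. i < n \<and> P (u i) (w i)}"
proof -
  have "card {i. i < n \<and> P (recip n u i) (recip n w i)} = card {i. i < n \<and> P (u ((n - i) mod n)) (w ((n - i) mod n))}"
    by (rule arg_cong[where f = card]) (auto simp: recip_def)
  also have "\<dots> = card {i. i < n \<and> P (u i) (w i)}"
    unfolding card_filter_sum by (rule sum_reidx[where F = "\<lambda>i. if P (u i) (w i) then 1 else 0"])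
  finally show ?thesis .
qed



declare add_bit_eq_xor[simp del] mult_bit_eq_and[simp del]

lemma vs: "vector_space pscale"
  by unfold_locales (auto simp: pscale_def algebra_simps)

interpretation V: vector_space pscale by (rule vs)

lemma cmul_add: "cmul n (c + d) a = cmul n c a + cmul n d a"
  by (rule ext) (simp add: cmul_def algebra_simps sum.distrib)

lemma cmul_scale: "cmul n (\<lambda>i. s * c i) a = (\<lambda>i. s * cmul n c a i)"
  by (rule ext) (simp add: cmul_def algebra_simps sum_distrib_left)

lemma xmono_Rn: "xmono n i \<in> Rn n" by (simp add: xmono_def Rn_def)

lemma cmul_xmono: "i < n \<Longrightarrow> cmul n (xmono n i) a k = (if k < n then a ((k + n - i) mod n) else 0)"
proof -
  assume i: "i < n"
  have "(\<Sum>j<n. xmono n i j * a ((k + n - j) mod n)) = (\<Sum>j<n. if j = i then a ((k + n - j) mod n) else 0)"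
    using i by (intro sum.cong refl) (auto simp: xmono_def)
  also have "\<dots> = a ((k + n - i) mod n)" using i by (simp add: sum.delta)
  finally show ?thesis by (simp add: cmul_def)
qed

lemma cmul_decomp: "c \<in> Rn n \<Longrightarrow> cmul n c a = (\<Sum>i<n. (\<lambda>k. c i * cmul n (xmono n i) a k))"
  apply (rule ext)
  apply (simp add: sum_fun_apply cmul_xmono)
  apply (simp add: cmul_def)
  done

lemma gbX_subspace: "V.subspace (gbX n a b)"
  unfolding V.subspace_def gbX_def
proof (intro conjI ballI allI)
  show "0 \<in> {(cmul n c a, cmul n c b) |c. c \<in> Rn n}"
    by (rule CollectI, rule exI[of _ 0]) (auto simp: cmul_def Rn_def zero_fun_def zero_prod_def)
next
  fix x y assume "x \<in> {(cmul n c a, cmul n c b) |c. c \<in> Rn n}" "y \<in> {(cmul n c a, cmul n c b) |c. c \<in> Rn n}"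
  then obtain c d where "c \<in> Rn n" "d \<in> Rn n" "x = (cmul n c a, cmul n c b)" "y = (cmul n d a, cmul n d b)" by blast
  then show "x + y \<in> {(cmul n c a, cmul n c b) |c. c \<in> Rn n}"
    by (intro CollectI exI[of _ "c + d"]) (auto simp: cmul_add Rn_def)
next
  fix s x assume "x \<in> {(cmul n c a, cmul n c b) |c. c \<in> Rn n}"
  then obtain c where "c \<in> Rn n" "x = (cmul n c a, cmul n c b)" by blast
  then show "pscale s x \<in> {(cmul n c a, cmul n c b) |c. c \<in> Rn n}"
    by (intro CollectI exI[of _ "\<lambda>i. s * c i"]) (auto simp: cmul_scale Rn_def pscale_def)
qed

lemma addcyc_eq: "addcyc n a b = gbX n a b"
proof
  show "addcyc n a b \<subseteq> gbX n a b"
    unfolding addcyc_def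
    by (rule V.span_minimal[OF _ gbX_subspace]) (auto simp: gbX_def intro: xmono_Rn)
next
  show "gbX n a b \<subseteq> addcyc n a b"
  proof
    fix x assume "x \<in> gbX n a b"
    then obtain c where c: "c \<in> Rn n" "x = (cmul n c a, cmul n c b)" by (auto simp: gbX_def)
    have "x = (\<Sum>i<n. pscale (c i) (cmul n (xmono n i) a, cmul n (xmono n i) b))"
      using c by (simp add: sum_prod pscale_def cmul_decomp[of c n a] cmul_decomp[of c n b])
    also have "\<dots> \<in> addcyc n a b"
      unfolding addcyc_def
      by (intro V.span_sum V.span_scale V.span_base) auto
    finally show "x \<in> addcyc n a b" .
  qed
qed



definition phi :: "nat \<Rightarrow> qvec \<Rightarrow> qvec" where
  "phi n p = (recip n (snd p), recip n (fst p))"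

lemma recip_add: "recip n (f + g) = recip n f + recip n g"
  by (rule ext) (simp add: recip_def)

lemma recip_scale: "recip n (\<lambda>i. s * f i) = (\<lambda>i. s * recip n f i)"
  by (rule ext) (simp add: recip_def)

lemma recip_zero: "recip n 0 = 0"
  by (rule ext) (simp add: recip_def)

lemma phi_linear: "Vector_Spaces.linear pscale pscale (phi n)"
  unfolding Vector_Spaces.linear_iff
  by (auto simp: vs phi_def recip_add pscale_def recip_scale)

lemma dim_img:
  assumes lf: "Vector_Spaces.linear pscale pscale f" and fi: "inj_on f (span2 S)"
  shows "dim2 (f ` S) = dim2 S"
proof -
  interpret lf: Vector_Spaces.linear pscale pscale f by fact
  obtain B where B: "B \<subseteq> S" "V.independent B" "S \<subseteq> V.span B" "card B = V.dim S"
    using V.basis_exists[of S] by auto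
  then have "V.span S = V.span B"
    using V.span_mono[of B S] V.span_mono[of S "V.span B"] V.span_span[of B] by auto
  moreover have "card (f ` B) = card B"
    using assms card_image[of f B] inj_on_subset[of f "V.span S" B] B V.span_superset by auto
  moreover have "(f ` B) \<subseteq> (f ` S)"
    using B by auto
  ultimately show ?thesis
  proof -
    assume sp: "V.span S = V.span B" and cd: "card (f ` B) = card B"
    have fiB: "inj_on f (V.span B)" using fi sp by simp
    have ind: "V.independent (f ` B)"
      by (rule lf.independent_injective_image[OF B(2) fiB])
    have "V.dim (f ` S) = V.dim (V.span (f ` S))" by simp
    also have "V.span (f ` S) = f ` V.span S" by (rule lf.span_image)
    also have "\<dots> = f ` V.span B" using sp by simp
    also have "\<dots> = V.span (f ` B)" by (rule lf.span_image[symmetric])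
    also have "V.dim (V.span (f ` B)) = card (f ` B)"
      using V.dim_span_eq_card_independent[OF ind] .
    finally show ?thesis using cd B(4) by simp
  qed
qed

lemma gbZ_img: "0 < n \<Longrightarrow> gbZ n a b = phi n ` gbX n a b"
proof
  assume n: "0 < n"
  show "gbZ n a b \<subseteq> phi n ` gbX n a b"
  proof
    fix x assume "x \<in> gbZ n a b"
    then obtain c where c: "c \<in> Rn n" "x = (cmul n c (recip n b), cmul n c (recip n a))"
      by (auto simp: gbZ_def)
    have "x = phi n (cmul n (recip n c) a, cmul n (recip n c) b)"
      using c n by (simp add: phi_def recip_cmul recip_recip)
    moreover have "(cmul n (recip n c) a, cmul n (recip n c) b) \<in> gbX n a b"
      by (auto simp: gbX_def recip_Rn)
    ultimately show "x \<in> phi n ` gbX n a b" by blast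
  qed
next
  assume n: "0 < n"
  show "phi n ` gbX n a b \<subseteq> gbZ n a b"
  proof
    fix x assume "x \<in> phi n ` gbX n a b"
    then obtain c where c: "c \<in> Rn n" "x = phi n (cmul n c a, cmul n c b)"
      by (auto simp: gbX_def)
    then show "x \<in> gbZ n a b"
      using n by (auto simp: gbZ_def phi_def recip_cmul recip_Rn)
  qed
qed

lemma gbX_sub: "gbX n a b \<subseteq> Rn n \<times> Rn n"
  by (auto simp: gbX_def cmul_Rn)

lemma dim_gbZ: "0 < n \<Longrightarrow> dim2 (gbZ n a b) = dim2 (gbX n a b)"
proof -
  assume n: "0 < n"
  have sp: "span2 (gbX n a b) = gbX n a b"
    using V.span_eq_iff gbX_subspace by blast
  have "inj_on (phi n) (span2 (gbX n a b))"
    unfolding sp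
  proof (rule inj_onI)
    fix x y assume "x \<in> gbX n a b" "y \<in> gbX n a b" "phi n x = phi n y"
    then show "x = y" using gbX_sub[of n a b]
      apply (cases x; cases y)
      apply (simp add: phi_def subset_iff)
      apply (metis recip_recip)
      done
  qed
  then show ?thesis using dim_img[OF phi_linear] gbZ_img[OF n] by simp
qed



lemma wt4_le: "wt4 n p \<le> bwt n p"
proof -
  have "{i. i < n \<and> (fst p i \<noteq> 0 \<or> snd p i \<noteq> 0)} = {i. i < n \<and> fst p i \<noteq> 0} \<union> {i. i < n \<and> snd p i \<noteq> 0}"
    by auto
  moreover have "card ({i. i < n \<and> fst p i \<noteq> 0} \<union> {i. i < n \<and> snd p i \<noteq> 0}) \<le> card {i. i < n \<and> fst p i \<noteq> 0} + card {i. i < n \<and> snd p i \<noteq> 0}"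
    by (rule card_Un_le)
  ultimately show ?thesis unfolding wt4_def bwt_def by simp
qed

lemma key:
  assumes n: "0 < n"
  shows "mind4 n (perp_s n (gbX n (recip n a) (recip n b)) - gbX n a b) \<le> gb_D n a b"
  unfolding gb_D_def css_D_def mind2_def
proof (rule Inf_greatest)
  let ?P = "perp_s n (gbX n (recip n a) (recip n b)) - gbX n a b"
  fix x assume "x \<in> (\<lambda>p. enat (bwt n p)) ` ((bdual n (gbZ n a b) - gbX n a b) \<union> (bdual n (gbX n a b) - gbZ n a b) - {0})"
  then obtain v where v: "v \<in> (bdual n (gbZ n a b) - gbX n a b) \<union> (bdual n (gbX n a b) - gbZ n a b)" "v \<noteq> 0"
    and x: "x = enat (bwt n v)" by blast
  have "\<exists>w. w \<in> ?P \<and> w \<noteq> 0 \<and> wt4 n w \<le> bwt n v"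
  proof (cases "v \<in> bdual n (gbZ n a b) - gbX n a b")
    case True
    have "v \<in> ?P"
    proof -
      have "v \<in> F4vecs n" using True by (simp add: bdual_def F4vecs_def)
      moreover have "sympl n v z = 0" if z: "z \<in> gbX n (recip n a) (recip n b)" for z
      proof -
        obtain c where c: "c \<in> Rn n" "z = (cmul n c (recip n a), cmul n c (recip n b))"
          using z by (auto simp: gbX_def)
        have "(cmul n c (recip n b), cmul n c (recip n a)) \<in> gbZ n a b"
          using c by (auto simp: gbZ_def)
        then have "bdot n v (cmul n c (recip n b), cmul n c (recip n a)) = 0"
          using True unfolding bdual_def by blast
        then show ?thesis using c by (simp add: sympl_def bdot_def)
      qed
      ultimately have "v \<in> perp_s n (gbX n (recip n a) (recip n b))" unfolding perp_s_def by blast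
      then show ?thesis using True by blast
    qed
    then show ?thesis using v(2) wt4_le[of n v] by (intro exI[of _ v]) simp
  next
    case False
    then have vX: "v \<in> bdual n (gbX n a b)" and vZ: "v \<notin> gbZ n a b" using v by auto
    obtain u1 u2 where u: "v = (u1, u2)" by (cases v)
    have u1: "u1 \<in> Rn n" and u2: "u2 \<in> Rn n" using vX u by (auto simp: bdual_def)
    define w where "w = (recip n u2, recip n u1)"
    have "w \<in> F4vecs n" by (simp add: w_def F4vecs_def recip_Rn)
    moreover have "sympl n w z = 0" if z: "z \<in> gbX n (recip n a) (recip n b)" for z
    proof -
      obtain c where c: "c \<in> Rn n" "z = (cmul n c (recip n a), cmul n c (recip n b))"
        using z by (auto simp: gbX_def)
      have ca: "cmul n c (recip n a) = recip n (cmul n (recip n c) a)"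
        using n c by (simp add: recip_cmul recip_recip)
      have cb: "cmul n c (recip n b) = recip n (cmul n (recip n c) b)"
        using n c by (simp add: recip_cmul recip_recip)
      have "(cmul n (recip n c) a, cmul n (recip n c) b) \<in> gbX n a b"
        by (auto simp: gbX_def recip_Rn)
      then have "bdot n v (cmul n (recip n c) a, cmul n (recip n c) b) = 0"
        using vX unfolding bdual_def by blast
      moreover have "sympl n w z = bdot n v (cmul n (recip n c) a, cmul n (recip n c) b)"
        unfolding sympl_def bdot_def w_def c(2) ca cb u fst_conv snd_conv sum.distrib sum_recip
        by (rule add.commute)
      ultimately show ?thesis by simp
    qed
    moreover have "w \<notin> gbX n a b"
    proof
      assume "w \<in> gbX n a b"
      then obtain c where c: "c \<in> Rn n" "recip n u2 = cmul n c a" "recip n u1 = cmul n c b"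
        by (auto simp: gbX_def w_def)
      have "u1 = cmul n (recip n c) (recip n b)"
        using c(3) n by (metis recip_cmul recip_recip u1)
      moreover have "u2 = cmul n (recip n c) (recip n a)"
        using c(2) n by (metis recip_cmul recip_recip u2)
      ultimately have "v \<in> gbZ n a b" using u by (auto simp: gbZ_def recip_Rn)
      then show False using vZ by simp
    qed
    ultimately have "w \<in> ?P" unfolding perp_s_def by blast
    moreover have "w \<noteq> 0"
    proof
      assume "w = 0"
      then have "recip n u2 = 0" "recip n u1 = 0" by (auto simp: w_def zero_prod_def)
      then have "u2 = 0" "u1 = 0" using u1 u2 by (metis recip_recip recip_zero)+
      then show False using v u by (simp add: zero_prod_def)
    qed
    moreover have "wt4 n w = wt4 n v"
      unfolding wt4_def w_def u
      using card_recip[of n "\<lambda>x y. x \<noteq> 0 \<or> y \<noteq> 0" u2 u1] by (simp add: disj_commute)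
    ultimately show ?thesis using wt4_le[of n v] by (intro exI[of _ w]) simp
  qed
  then obtain w where w: "w \<in> ?P" "w \<noteq> 0" "wt4 n w \<le> bwt n v" by blast
  show "mind4 n ?P \<le> x"
  proof -
    have "enat (wt4 n w) \<in> (\<lambda>p. enat (wt4 n p)) ` (?P - {0})" using w(1,2) by blast
    then have "Inf ((\<lambda>p. enat (wt4 n p)) ` (?P - {0})) \<le> enat (wt4 n w)" by (rule Inf_lower)
    also have "\<dots> \<le> enat (bwt n v)" using w(3) by simp
    finally show ?thesis unfolding x mind4_def .
  qed
qed

lemma mind4_mono: "mind4 n A \<le> mind4 n (A - B)"
  unfolding mind4_def by (rule Inf_superset_mono, rule image_mono) blast

theorem theorem2:
  fixes n :: nat and a b :: bpoly
  assumes "n \<ge> 1" and "a \<in> Rn n" and "b \<in> Rn n"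
  shows "let C = addcyc n a b; CR = addcyc_recip n a b; k = dim2 C in
    (\<exists>a' b'. a' \<in> Rn n \<and> b' \<in> Rn n \<and>
        gb_N n a' b' = 2 * n \<and> gb_K n a' b' = 2 * (n - k) \<and>
        gb_D n a' b' \<ge> mind4 n (perp_s n CR - C) \<and>
        (C = CR \<longrightarrow> gb_D n a' b' \<ge> mind4 n (perp_s n C - C))) \<and>
    mind4 n (perp_s n CR - C) \<ge> mind4 n (perp_s n CR) \<and>
    (C = CR \<longrightarrow> mind4 n (perp_s n C - C) \<ge> mind4 n (perp_s n C))"
proof -
  have n: "0 < n" using assms(1) by simp
  have K: "gb_K n a b = 2 * (n - dim2 (addcyc n a b))"
    unfolding gb_K_def css_K_def css_N_def addcyc_eq dim_gbZ[OF n] by simp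
  have D: "gb_D n a b \<ge> mind4 n (perp_s n (addcyc_recip n a b) - addcyc n a b)"
    unfolding addcyc_recip_def addcyc_eq using key[OF n] .
  have E: "a \<in> Rn n \<and> b \<in> Rn n \<and>
        gb_N n a b = 2 * n \<and> gb_K n a b = 2 * (n - dim2 (addcyc n a b)) \<and>
        gb_D n a b \<ge> mind4 n (perp_s n (addcyc_recip n a b) - addcyc n a b) \<and>
        (addcyc n a b = addcyc_recip n a b \<longrightarrow> gb_D n a b \<ge> mind4 n (perp_s n (addcyc n a b) - addcyc n a b))"
  proof (intro conjI impI)
    assume e: "addcyc n a b = addcyc_recip n a b"
    show "gb_D n a b \<ge> mind4 n (perp_s n (addcyc n a b) - addcyc n a b)"
      using D unfolding e[symmetric] .
  qed (use assms K D in \<open>simp_all add: gb_N_def css_N_def\<close>)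
  show ?thesis
    unfolding Let_def
    using E mind4_mono by blast
qed

end
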